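(* Let $\psi^{(0)}\in\mathbb{R}$ and $\psi^{(1)}\in\mathbb{R}^2$ be realizable, i.e. $\psi^{(0)}>0$ and $|\psi^{(1)}|\le \psi^{(0)}$, and let $\psi^{(2)}=\psi^{(2)}(\psi^{(0)},\psi^{(1)})$ be given by the $M_1$ closure. Let $\nu\in\mathbb{R}^2$ be an arbitrary unit vector. Then for each choice of sign, the pair $\bigl(\psi^{(0)}\pm \psi^{(1)}\cdot\nu,\ \psi^{(1)}\pm \psi^{(2)}\nu\bigr)$ is realizable.
   Context: Moments of an angular flux $\psi\ge 0$ (a non-negative density or measure, Dirac masses allowed) on the unit sphere are $\psi^{(0)}=\int\psi\,d\Omega$, $\psi^{(1)}=\int\Omega\psi\,d\Omega$, $\psi^{(2)}=\int\Omega\Omega^T\psi\,d\Omega$. A pair $(\psi^{(0)},\psi^{(1)})$ is called realizable if it is the zeroth and first moment of a non-negative density; this holds iff $\psi^{(0)}>0$ and $|\psi^{(1)}|\le\psi^{(0)}$. The $M_1$ closure (entropy closure for photons) is $\psi^{(2)}=D(\psi^{(1)}/\psi^{(0)})\,\psi^{(0)}$ with $D(n)=\frac{1-\chi(|n|)}{2}\mathrm{id}+\frac{3\chi(|n|)-1}{2}\frac{nn^T}{|n|^2}$ and Eddington factor $\chi(f)=\frac{3+4f^2}{5+2\sqrt{4-3f^2}}$ for $f\in[0,1]$; $\psi^{(2)}$ is the second moment of a non-negative density realizing $(\psi^{(0)},\psi^{(1)})$ (the entropy minimizer). Here the problem is two-dimensional: $\psi^{(1)}\in\mathbb{R}^2$,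 $\psi^{(2)}$ is a $2\times2$ matrix. *)

theory Defs
  imports "HOL-Analysis.Analysis"
begin

definition eddington :: "real \<Rightarrow> real" where
  "eddington f = (3 + 4 * f\<^sup>2) / (5 + 2 * sqrt (4 - 3 * f\<^sup>2))"

definition outer :: "real^2 \<Rightarrow> real^2 \<Rightarrow> real^2^2" where
  "outer u v = (\<chi> i j. u $ i * v $ j)"

text \<open>Closure matrix D(n). For n = 0 the second term is n n^T / |n|^2 with
  division by zero yielding 0; its coefficient (3 chi(0) - 1)/2 vanishes anyway.\<close>
definition M1_D :: "real^2 \<Rightarrow> real^2^2" where
  "M1_D n = ((1 - eddington (norm n)) / 2) *\<^sub>R mat 1
          + ((3 * eddington (norm n) - 1) / 2 / (norm n)\<^sup>2) *\<^sub>R outer n n"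

definition M1_psi2 :: "real \<Rightarrow> real^2 \<Rightarrow> real^2^2" where
  "M1_psi2 psi0 psi1 = psi0 *\<^sub>R M1_D ((1 / psi0) *\<^sub>R psi1)"

definition realizable :: "real \<Rightarrow> real^2 \<Rightarrow> bool" where
  "realizable psi0 psi1 \<longleftrightarrow> psi0 > 0 \<and> norm psi1 \<le> psi0"

text \<open>Realizability as "moments of some non-negative measure" (the zero measure
  allowed): psi0 >= 0 and |psi1| <= psi0.\<close>
definition realizable_meas :: "real \<Rightarrow> real^2 \<Rightarrow> bool" where
  "realizable_meas psi0 psi1 \<longleftrightarrow> psi0 \<ge> 0 \<and> norm psi1 \<le> psi0"

end

theory Submission
  imports Defs
begin

lemma outer_mult: "outer p p *v v = (p \<bullet> v) *\<^sub>R (p::real^2)"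
  unfolding outer_def
  by (simp add: vec_eq_iff matrix_vector_mult_def sum_2 inner_vec_def algebra_simps)

lemma Dmult:
  "M1_D p *v v = ((1 - eddington (norm p)) / 2) *\<^sub>R v
     + (((3 * eddington (norm p) - 1) / 2 / (norm p)\<^sup>2) * (p \<bullet> v)) *\<^sub>R p"
  unfolding M1_D_def matrix_vector_mult_add_rdistrib scaleR_matrix_vector_assoc[symmetric]
    outer_mult by simp

lemma Qnonneg:
  fixes r u :: real
  assumes "1 \<le> r" "r \<le> 2"
  shows "0 \<le> 6*(2-r)*u\<^sup>2 + 12*((4-r\<^sup>2)/3)*u + (2*r+4)*((4-r\<^sup>2)/3)"
proof (cases "r = 2")
  case True then show ?thesis by simp
next
  case False
  hence p: "2 - r > 0" using assms by simp
  have "6*(2-r)*(6*(2-r)*u\<^sup>2 + 12*((4-r\<^sup>2)/3)*u + (2*r+4)*((4-r\<^sup>2)/3))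
      = (6*(2-r)*u + 6*((4-r\<^sup>2)/3))\<^sup>2"
    by (simp add: power2_eq_square field_simps; algebra)
  hence "0 \<le> 6*(2-r)*(6*(2-r)*u\<^sup>2 + 12*((4-r\<^sup>2)/3)*u + (2*r+4)*((4-r\<^sup>2)/3))" by simp
  with p show ?thesis by (simp add: zero_le_mult_iff)
qed

lemma keyineq:
  fixes u r :: real
  assumes "1 \<le> r" "r \<le> 2"
  shows "(1 + u)\<^sup>2 * ((4-r\<^sup>2)/3) - (( (4-r\<^sup>2)/3 + (2 - r) * u)\<^sup>2
     + 2 * ((4-r\<^sup>2)/3 + (2 - r) * u) * ((r - 1)/3) * u
     + ((r - 1)/3)\<^sup>2 * ((4-r\<^sup>2)/3)) \<ge> 0"
proof -
  have "(1 + u)\<^sup>2 * ((4-r\<^sup>2)/3) - (( (4-r\<^sup>2)/3 + (2 - r) * u)\<^sup>2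
     + 2 * ((4-r\<^sup>2)/3 + (2 - r) * u) * ((r - 1)/3) * u
     + ((r - 1)/3)\<^sup>2 * ((4-r\<^sup>2)/3)) =
     (r-1)/9 * (6*(2-r)*u\<^sup>2 + 12*((4-r\<^sup>2)/3)*u + (2*r+4)*((4-r\<^sup>2)/3))"
    by (simp add: power2_eq_square algebra_simps divide_simps)
  also have "\<dots> \<ge> 0" using Qnonneg[OF assms, of u] assms by simp
  finally show ?thesis .
qed

theorem lemma1:
  fixes psi0 :: real and psi1 nu :: "real^2" and s :: real
  assumes "realizable psi0 psi1"
    and "norm nu = 1"
    and "s = 1 \<or> s = -1"
  shows "realizable_meas (psi0 + s * (psi1 \<bullet> nu))
                         (psi1 + s *\<^sub>R (M1_psi2 psi0 psi1 *v nu))"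
proof -
  have P0: "psi0 > 0" and N1: "norm psi1 \<le> psi0" using assms(1) by (auto simp: realizable_def)
  define p where "p = (1 / psi0) *\<^sub>R psi1"
  have psi1: "psi1 = psi0 *\<^sub>R p" using P0 by (simp add: p_def)
  define f where "f = norm p"
  have f0: "0 \<le> f" by (simp add: f_def)
  have f1: "f \<le> 1" using N1 P0 by (simp add: f_def p_def divide_simps)
  define t where "t = p \<bullet> nu"
  have tf: "\<bar>t\<bar> \<le> f" using Cauchy_Schwarz_ineq2[of p nu] assms(2) by (simp add: t_def f_def)
  have s2: "s * s = 1" using assms(3) by auto
  define u where "u = s * t"
  have uf: "\<bar>u\<bar> \<le> f" using assms(3) tf by (auto simp: u_def)
  define r where "r = sqrt (4 - 3 * f\<^sup>2)"
  have fsq: "f\<^sup>2 \<le> 1" using f1 f0 power_le_one[of f 2] by simp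
  have r2: "r\<^sup>2 = 4 - 3 * f\<^sup>2" using fsq unfolding r_def
    by simp
  have "1 \<le> 4 - 3 * f\<^sup>2" using fsq by simp
  hence r1: "1 \<le> r" unfolding r_def by simp
  have "4 - 3 * f\<^sup>2 \<le> 4" by simp
  hence rle2: "r \<le> 2" unfolding r_def by (metis real_sqrt_le_mono real_sqrt_four)
  have F: "f\<^sup>2 = (4 - r\<^sup>2)/3" using r2 by simp
  have ed: "eddington f = (5 - 2*r)/3"
  proof -
    have "3 + 4 * f\<^sup>2 = (5 - 2*r) * (5 + 2*r) / 3" using F by (simp add: algebra_simps power2_eq_square)
    moreover have "5 + 2 * sqrt (4 - 3 * f\<^sup>2) = 5 + 2*r" by (simp add: r_def)
    ultimately show ?thesis unfolding eddington_def using r1 by simp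
  qed
  define a where "a = (r - 1)/3"
  define b where "b = 2 - r"
  have Dv: "M1_D p *v nu = a *\<^sub>R nu + (b / f\<^sup>2 * t) *\<^sub>R p"
  proof -
    have c1: "(1 - (5 - 2*r)/3) / 2 = a" by (simp add: a_def field_simps)
    have c2: "(3 * ((5 - 2*r)/3) - 1) / 2 = b" by (simp add: b_def field_simps)
    show ?thesis unfolding Dmult f_def[symmetric] ed t_def[symmetric] c1 c2 ..
  qed
  define w where "w = p + s *\<^sub>R (a *\<^sub>R nu + (b / f\<^sup>2 * t) *\<^sub>R p)"
  have vec: "psi1 + s *\<^sub>R (M1_psi2 psi0 psi1 *v nu) = psi0 *\<^sub>R w"
    unfolding M1_psi2_def p_def[symmetric] scaleR_matrix_vector_assoc[symmetric] Dv w_def psi1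
    by (simp add: algebra_simps Dv)
  have sc: "psi0 + s * (psi1 \<bullet> nu) = psi0 * (1 + u)"
    unfolding psi1 u_def t_def by (simp add: algebra_simps)
  have u1: "0 \<le> 1 + u" using uf f1 by linarith
  have wle: "norm w \<le> 1 + u"
  proof (cases "f = 0")
    case True
    hence "p = 0" by (simp add: f_def)
    hence "w = (s * a) *\<^sub>R nu" by (simp add: w_def)
    moreover have "a = 1/3" using True r_def by (simp add: a_def)
    moreover have "u = 0" using True uf by simp
    ultimately show ?thesis using assms(2,3) by auto
  next
    case False
    hence fp: "f > 0" using f0 by simp
    define k where "k = 1 + s * b * t / f\<^sup>2"
    have w2: "w = k *\<^sub>R p + (s * a) *\<^sub>R nu" by (simp add: w_def k_def algebra_simps)
    have "(norm w)\<^sup>2 = w \<bullet> w" by (simp add: power2_norm_eq_inner)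
    also have "\<dots> = k\<^sup>2 * f\<^sup>2 + 2 * k * (s * a) * t + (s*a)\<^sup>2"
    proof -
      have nn: "nu \<bullet> nu = 1" using assms(2) by (metis norm_eq_1)
      have pp: "p \<bullet> p = f\<^sup>2" by (simp add: f_def power2_norm_eq_inner)
      have pn: "nu \<bullet> p = t" by (simp add: t_def inner_commute)
      have pn2: "p \<bullet> nu = t" by (simp add: t_def)
      have "w \<bullet> w = k * k * (p \<bullet> p) + 2 * k * (s * a) * (p \<bullet> nu) + (s * a) * (s * a) * (nu \<bullet> nu)"
        unfolding w2 by (simp add: inner_add_left inner_add_right inner_commute[of nu p] algebra_simps)
      thus ?thesis unfolding nn pp pn2 by (simp add: power2_eq_square)
    qed
    also have "\<dots> = ((f\<^sup>2 + b * u)\<^sup>2 + 2 * (f\<^sup>2 + b*u) * a * u + a\<^sup>2 * f\<^sup>2) / f\<^sup>2"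
    proof -
      have kf: "k * f\<^sup>2 = f\<^sup>2 + b*u" using fp by (simp add: k_def u_def field_simps)
      have e1: "k\<^sup>2 * f\<^sup>2 = (k * f\<^sup>2)\<^sup>2 / f\<^sup>2" using fp by (simp add: power2_eq_square)
      have e2: "2 * k * (s * a) * t = 2 * (k * f\<^sup>2) * a * u / f\<^sup>2" using fp by (simp add: u_def)
      have e3: "(s*a)\<^sup>2 = a\<^sup>2 * f\<^sup>2 / f\<^sup>2" using fp s2 by (simp add: power2_eq_square)
      show ?thesis unfolding e1 e2 e3 kf add_divide_distrib by (rule refl)
    qed
    also have "\<dots> \<le> (1 + u)\<^sup>2"
    proof -
      have "(f\<^sup>2 + b * u)\<^sup>2 + 2 * (f\<^sup>2 + b*u) * a * u + a\<^sup>2 * f\<^sup>2 \<le> (1+u)\<^sup>2 * f\<^sup>2"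
        using keyineq[OF r1 rle2, of u] unfolding F a_def b_def by linarith
      moreover have "f\<^sup>2 > 0" using fp by simp
      ultimately show ?thesis by (simp add: pos_divide_le_eq)
    qed
    finally show ?thesis by (rule power2_le_imp_le[OF _ u1])
  qed
  show ?thesis unfolding realizable_meas_def vec sc
    using P0 u1 wle by (simp add: mult_left_mono)
qed

end
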